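(* Let $V$ be an $m$-dimensional real vector space carrying two inner products $g$ and $g_E$, and let $\mathrm{II}$ be a symmetric bilinear form on $V$ which is positive semidefinite, with $g_E$-trace $\bar H=\mathrm{tr}_{g_E}\mathrm{II}>0$. Let $H>0$ satisfy $H^2 g(v,v)\ge\bar H^2 g_E(v,v)$ for all $v\in V$. Then for every $g$-orthonormal basis $\{\tau_i\}_{i=1}^m$ and every $g_E$-orthonormal basis $\{\bar\tau_i\}_{i=1}^m$ of $V$, $$H\;\ge\;\sum_{i=1}^m\mathrm{II}(\tau_i,\bar\tau_i).$$
   Context: In the paper this is applied at a point $p$ of $\partial M$ with $V=T_p\partial M$ identified with $T_{F(p)}\partial\bar M$ via the boundary diffeomorphism $F:\partial M\to\partial\bar M$ ($\bar M\subset\mathbb R^{n+2}$ convex), $g$ the induced Riemannian metric, $g_E$ the pulled-back Euclidean metric, $\mathrm{II}$ the pulled-back Euclidean second fundamental form of $\partial\bar M$, $\bar H$ its mean curvature and $H=H_{\partial M}$ the mean curvature of $\partial M$; the hypothesis is then the rescaled mean curvature comparison $H_{\partial M}^2g\ge \bar H^2 g_E$. *)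

theory Defs
  imports "HOL-Analysis.Analysis"
begin

definition is_inner_product :: "('a::real_vector \<Rightarrow> 'a \<Rightarrow> real) \<Rightarrow> bool" where
  "is_inner_product g \<longleftrightarrow> bilinear g \<and> (\<forall>u v. g u v = g v u) \<and> (\<forall>v. v \<noteq> 0 \<longrightarrow> g v v > 0)"

definition sym_bilinear_form :: "('a::real_vector \<Rightarrow> 'a \<Rightarrow> real) \<Rightarrow> bool" where
  "sym_bilinear_form B \<longleftrightarrow> bilinear B \<and> (\<forall>u v. B u v = B v u)"

definition orthonormal_basis ::
    "('a::euclidean_space \<Rightarrow> 'a \<Rightarrow> real) \<Rightarrow> (nat \<Rightarrow> 'a) \<Rightarrow> bool" where
  "orthonormal_basis g tau \<longleftrightarrow>
     (\<forall>i<DIM('a). \<forall>j<DIM('a). g (tau i) (tau j) = (if i = j then 1 else 0)) \<and>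
     span (tau ` {..<DIM('a)}) = UNIV"

text \<open>Trace of a bilinear form B with respect to an inner product g:
  the sum of B(e_i,e_i) over a g-orthonormal basis (independent of the choice).\<close>
definition trace_wrt ::
    "('a::euclidean_space \<Rightarrow> 'a \<Rightarrow> real) \<Rightarrow> ('a \<Rightarrow> 'a \<Rightarrow> real) \<Rightarrow> real" where
  "trace_wrt g B = (let e = (SOME e. orthonormal_basis g e) in (\<Sum>i<DIM('a). B (e i) (e i)))"

end

theory Submission
  imports Defs
begin

definition psdf :: "('a::real_vector \<Rightarrow> 'a \<Rightarrow> real) \<Rightarrow> bool" where
  "psdf Q \<longleftrightarrow> bilinear Q \<and> (\<forall>u v. Q u v = Q v u) \<and> (\<forall>v. Q v v \<ge> 0)"

lemma bil_lin1: "bilinear Q \<Longrightarrow> linear (\<lambda>x. Q x y)"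
  by (simp add: bilinear_def)
lemma bil_lin2: "bilinear Q \<Longrightarrow> linear (\<lambda>y. Q x y)"
  by (simp add: bilinear_def)

lemma quad_expand:
  fixes Q :: "'a::real_vector \<Rightarrow> 'a \<Rightarrow> real"
  assumes "bilinear Q" "\<forall>u v. Q u v = Q v u"
  shows "Q (u - t *\<^sub>R w) (u - t *\<^sub>R w) = Q u u - 2 * t * Q u w + t\<^sup>2 * Q w w"
proof -
  have l1: "linear (\<lambda>x. Q x y)" for y using assms bil_lin1 by blast
  have l2: "linear (\<lambda>y. Q x y)" for x using assms bil_lin2 by blast
  have "Q (u - t *\<^sub>R w) (u - t *\<^sub>R w) = Q u (u - t *\<^sub>R w) - t * Q w (u - t *\<^sub>R w)"
    using linear_diff[OF l1] linear_scale[OF l1] by simp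
  also have "\<dots> = Q u u - t * Q u w - t * (Q w u - t * Q w w)"
    using linear_diff[OF l2] linear_scale[OF l2] by simp
  finally show ?thesis using assms(2) by (simp add: power2_eq_square algebra_simps)
qed

lemma psdf_CS:
  assumes "psdf Q"
  shows "(Q u w)\<^sup>2 \<le> Q u u * Q w w"
proof -
  have b: "bilinear Q" "\<forall>u v. Q u v = Q v u" and p: "\<And>v. Q v v \<ge> 0"
    using assms by (auto simp: psdf_def)
  have q: "0 \<le> Q u u - 2 * t * Q u w + t\<^sup>2 * Q w w" for t
    using quad_expand[OF b, of u t w] p[of "u - t *\<^sub>R w"] by simp
  show ?thesis
  proof (cases "Q w w > 0")
    case True
    have "0 \<le> Q u u - 2 * (Q u w / Q w w) * Q u w + (Q u w / Q w w)\<^sup>2 * Q w w" by (rule q)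
    also have "\<dots> = Q u u - (Q u w)\<^sup>2 / Q w w" using True by (simp add: power2_eq_square field_simps)
    finally show ?thesis using True by (simp add: field_simps)
  next
    case False
    then have z: "Q w w = 0" using p[of w] by simp
    have "Q u w = 0"
    proof (rule ccontr)
      assume ne: "Q u w \<noteq> 0"
      have "0 \<le> Q u u - 2 * ((Q u u + 1) / (2 * Q u w)) * Q u w" using q[of "(Q u u + 1) / (2 * Q u w)"] z by simp
      also have "\<dots> = -1" using ne by (simp add: field_simps)
      finally show False by simp
    qed
    then show ?thesis using z by simp
  qed
qed

lemma onb_inj:
  fixes e :: "nat \<Rightarrow> 'a::euclidean_space"
  assumes "orthonormal_basis h e"
  shows "inj_on e {..<DIM('a::euclidean_space)}"
proof (rule inj_onI)
  fix i j assume ij: "i \<in> {..<DIM('a)}" "j \<in> {..<DIM('a)}" "e i = e j"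
  show "i = j"
  proof (rule ccontr)
    assume "i \<noteq> j"
    then have "h (e i) (e j) = 0" "h (e i) (e i) = 1" using assms ij(1,2) unfolding orthonormal_basis_def by auto
    then show False using ij(3) by simp
  qed
qed

lemma onb_expand:
  fixes h :: "'a::euclidean_space \<Rightarrow> 'a \<Rightarrow> real"
  assumes ip: "is_inner_product h" and onb: "orthonormal_basis h e"
  shows "v = (\<Sum>i<DIM('a). h v (e i) *\<^sub>R e i)"
proof -
  have v: "v \<in> span (e ` {..<DIM('a)})" using onb by (simp add: orthonormal_basis_def)
  then obtain c where c: "v = (\<Sum>x\<in>e ` {..<DIM('a)}. c x *\<^sub>R x)"
    using span_finite[of "e ` {..<DIM('a)}"] by auto
  have v2: "v = (\<Sum>i<DIM('a). c (e i) *\<^sub>R e i)"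
    using c sum.reindex[OF onb_inj[OF onb], of "\<lambda>x. c x *\<^sub>R x"] by simp
  have l1: "linear (\<lambda>x. h x y)" for y using ip bil_lin1 by (auto simp: is_inner_product_def)
  have "h v (e j) = c (e j)" if j: "j < DIM('a)" for j
  proof -
    have "h v (e j) = (\<Sum>i<DIM('a). c (e i) * h (e i) (e j))"
      by (subst v2) (simp add: linear_sum[OF l1] linear_scale[OF l1])
    also have "\<dots> = (\<Sum>i<DIM('a). if i = j then c (e j) else 0)"
      using onb j by (intro sum.cong) (auto simp: orthonormal_basis_def)
    also have "\<dots> = c (e j)" using j by simp
    finally show ?thesis .
  qed
  then show ?thesis using v2 by simp
qed

lemma onb_lin:
  fixes h :: "'a::euclidean_space \<Rightarrow> 'a \<Rightarrow> real"
  assumes ip: "is_inner_product h" and onb: "orthonormal_basis h e" and l: "linear f"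
  shows "f v = (\<Sum>i<DIM('a). h v (e i) * f (e i))"
proof -
  have "f v = f (\<Sum>i<DIM('a). h v (e i) *\<^sub>R e i)" using onb_expand[OF ip onb] by metis
  also have "\<dots> = (\<Sum>i<DIM('a). h v (e i) * f (e i))" by (simp add: linear_sum[OF l] linear_scale[OF l])
  finally show ?thesis .
qed

lemma onb_parseval:
  fixes h :: "'a::euclidean_space \<Rightarrow> 'a \<Rightarrow> real"
  assumes ip: "is_inner_product h" and onb: "orthonormal_basis h e"
  shows "h u v = (\<Sum>i<DIM('a). h u (e i) * h v (e i))"
proof -
  have l: "linear (\<lambda>x. h x u)" using ip bil_lin1 by (auto simp: is_inner_product_def)
  have s: "h x y = h y x" for x y using ip by (auto simp: is_inner_product_def)
  show ?thesis using onb_lin[OF ip onb l, of v] by (simp add: s mult.commute)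
qed

lemma rank_one:
  fixes g gE :: "'a::euclidean_space \<Rightarrow> 'a \<Rightarrow> real" and f :: "'a \<Rightarrow> real"
  assumes gip: "is_inner_product g" and gEip: "is_inner_product gE"
    and tonb: "orthonormal_basis g t" and bonb: "orthonormal_basis gE b"
    and comp: "\<forall>v. gE v v \<le> k\<^sup>2 * g v v" and k: "k > 0" and l: "linear f"
  shows "(\<Sum>i<DIM('a). f (t i) * f (b i)) \<le> k * (\<Sum>i<DIM('a). (f (b i))\<^sup>2)"
proof -
  define u where "u = (\<Sum>i<DIM('a). f (b i) *\<^sub>R t i)"
  define s where "s = (\<Sum>i<DIM('a). (f (b i))\<^sup>2)"
  have S1: "(\<Sum>i<DIM('a). f (t i) * f (b i)) = f u"
    unfolding u_def by (simp add: linear_sum[OF l] linear_scale[OF l] mult.commute)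
  have S2: "f u = (\<Sum>j<DIM('a). gE u (b j) * f (b j))" by (rule onb_lin[OF gEip bonb l])
  have S3: "gE u (b j) * f (b j) \<le> (gE u (b j))\<^sup>2 / (2*k) + k * (f (b j))\<^sup>2 / 2" for j
  proof -
    have "0 \<le> (gE u (b j) - k * f (b j))\<^sup>2" by simp
    then have "2 * k * (gE u (b j) * f (b j)) \<le> (gE u (b j))\<^sup>2 + k\<^sup>2 * (f (b j))\<^sup>2"
      by (simp add: power2_eq_square algebra_simps)
    then show ?thesis using k by (simp add: field_simps power2_eq_square)
  qed
  have S4: "gE u u = (\<Sum>j<DIM('a). (gE u (b j))\<^sup>2)"
    using onb_parseval[OF gEip bonb, of u u] by (simp add: power2_eq_square)
  have l1: "linear (\<lambda>x. g x y)" for y using gip bil_lin1 by (auto simp: is_inner_product_def)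
  have gut: "g u (t j) = f (b j)" if j: "j < DIM('a)" for j
  proof -
    have "g u (t j) = (\<Sum>i<DIM('a). f (b i) * g (t i) (t j))"
      unfolding u_def by (simp add: linear_sum[OF l1] linear_scale[OF l1])
    also have "\<dots> = (\<Sum>i<DIM('a). if i = j then f (b j) else 0)"
      using tonb j by (intro sum.cong) (auto simp: orthonormal_basis_def)
    also have "\<dots> = f (b j)" using j by simp
    finally show ?thesis .
  qed
  have S5: "g u u = s"
    using onb_parseval[OF gip tonb, of u u] gut unfolding s_def by (simp add: power2_eq_square)
  have "f u \<le> (\<Sum>j<DIM('a). (gE u (b j))\<^sup>2 / (2*k) + k * (f (b j))\<^sup>2 / 2)"
    unfolding S2 by (rule sum_mono) (rule S3)
  also have "\<dots> = gE u u / (2*k) + k * s / 2"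
    unfolding S4 s_def by (simp add: sum.distrib sum_divide_distrib sum_distrib_left)
  also have "\<dots> \<le> k\<^sup>2 * s / (2*k) + k * s / 2"
    using comp[rule_format, of u] S5 k by (simp add: divide_right_mono)
  also have "\<dots> = k * s" using k by (simp add: power2_eq_square field_simps)
  finally show ?thesis using S1 s_def by simp
qed

lemma main_ind:
  fixes g gE :: "'a::euclidean_space \<Rightarrow> 'a \<Rightarrow> real"
  assumes gip: "is_inner_product g" and gEip: "is_inner_product gE"
    and tonb: "orthonormal_basis g t" and bonb: "orthonormal_basis gE b"
    and comp: "\<forall>v. gE v v \<le> k\<^sup>2 * g v v" and k: "k > 0"
  shows "psdf Q \<Longrightarrow> card {i. i < DIM('a) \<and> (\<exists>v. Q (b i) v \<noteq> 0)} \<le> n \<Longrightarrow>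
    (\<Sum>i<DIM('a). Q (t i) (b i)) \<le> k * (\<Sum>i<DIM('a). Q (b i) (b i))"
proof (induction n arbitrary: Q)
  have zero: "(\<Sum>i<DIM('a). Q (t i) (b i)) \<le> k * (\<Sum>i<DIM('a). Q (b i) (b i))"
    if "psdf Q" "{i. i < DIM('a) \<and> (\<exists>v. Q (b i) v \<noteq> 0)} = {}" for Q
  proof -
    have z: "Q (b i) v = 0" if "i < DIM('a)" for i v using that \<open>{i. i < DIM('a) \<and> (\<exists>v. Q (b i) v \<noteq> 0)} = {}\<close> by auto
    have sy: "Q u v = Q v u" for u v using \<open>psdf Q\<close> by (auto simp: psdf_def)
    have "(\<Sum>i<DIM('a). Q (t i) (b i)) = 0" by (intro sum.neutral) (auto simp: sy z)
    moreover have "(\<Sum>i<DIM('a). Q (b i) (b i)) = 0" by (intro sum.neutral) (auto simp: z)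
    ultimately show ?thesis by simp
  qed
  {
    case 0
    then show ?case using zero by simp
  next
    case (Suc n)
    define N where "N = {i. i < DIM('a) \<and> (\<exists>v. Q (b i) v \<noteq> 0)}"
    show ?case
    proof (cases "N = {}")
      case True
      then show ?thesis using zero Suc.prems unfolding N_def by blast
    next
      case False
      then obtain j where jN: "j \<in> N" by blast
      then obtain v0 where j: "j < DIM('a)" and v0: "Q (b j) v0 \<noteq> 0" unfolding N_def by blast
      have bil: "bilinear Q" and sy: "\<And>u v. Q u v = Q v u" and ps: "\<And>v. Q v v \<ge> 0"
        using Suc.prems by (auto simp: psdf_def)
      define c where "c = Q (b j) (b j)"
      have "c > 0"
      proof (rule ccontr)
        assume "\<not> c > 0"
        then have "c = 0" using ps[of "b j"] unfolding c_def by simp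
        then have "(Q (b j) v0)\<^sup>2 \<le> 0" using psdf_CS[OF Suc.prems(1), of "b j" v0] unfolding c_def by simp
        then show False using v0 by simp
      qed
      define R where "R = (\<lambda>u v. Q u v - Q u (b j) * Q v (b j) / c)"
      have bilR: "bilinear R"
        unfolding bilinear_def R_def
        by (auto intro!: linearI simp: bilinear_ladd[OF bil] bilinear_radd[OF bil]
            bilinear_lmul[OF bil] bilinear_rmul[OF bil] algebra_simps add_divide_distrib)
      have psR: "psdf R"
        unfolding psdf_def
      proof (intro conjI allI)
        show "bilinear R" by (rule bilR)
        show "R u v = R v u" for u v unfolding R_def using sy by (simp add: mult.commute)
        show "0 \<le> R v v" for v
        proof -
          have "(Q v (b j))\<^sup>2 \<le> Q v v * c" using psdf_CS[OF Suc.prems(1)] unfolding c_def by blast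
          then have "(Q v (b j))\<^sup>2 / c \<le> Q v v" using \<open>c > 0\<close> by (simp add: divide_le_eq)
          then show ?thesis unfolding R_def by (simp add: power2_eq_square)
        qed
      qed
      have sub: "{i. i < DIM('a) \<and> (\<exists>v. R (b i) v \<noteq> 0)} \<subseteq> N - {j}"
      proof
        fix i assume "i \<in> {i. i < DIM('a) \<and> (\<exists>v. R (b i) v \<noteq> 0)}"
        then obtain v where i: "i < DIM('a)" and v: "R (b i) v \<noteq> 0" by blast
        have "i \<noteq> j"
        proof
          assume "i = j"
          then have "R (b i) v = 0" unfolding R_def c_def using \<open>c > 0\<close> sy[of v "b j"] unfolding c_def by simp
          then show False using v by simp
        qed
        moreover have "i \<in> N"
        proof (rule ccontr)
          assume "i \<notin> N"
          then have "\<forall>w. Q (b i) w = 0" using i unfolding N_def by blast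
          then have "R (b i) v = 0" unfolding R_def by simp
          then show False using v by simp
        qed
        ultimately show "i \<in> N - {j}" by blast
      qed
      have "card {i. i < DIM('a) \<and> (\<exists>v. R (b i) v \<noteq> 0)} \<le> card (N - {j})"
        by (rule card_mono[OF _ sub]) (simp add: N_def)
      also have "\<dots> = card N - 1" using jN by (simp add: N_def)
      also have "\<dots> \<le> n" using Suc.prems(2) unfolding N_def by simp
      finally have IH: "(\<Sum>i<DIM('a). R (t i) (b i)) \<le> k * (\<Sum>i<DIM('a). R (b i) (b i))"
        using Suc.IH[OF psR] by blast
      define f where "f = (\<lambda>u. Q u (b j))"
      have lf: "linear f" unfolding f_def using bil by (simp add: bilinear_def)
      have r1: "(\<Sum>i<DIM('a). f (t i) * f (b i)) \<le> k * (\<Sum>i<DIM('a). (f (b i))\<^sup>2)"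
        by (rule rank_one[OF gip gEip tonb bonb comp k lf])
      have eF: "(\<Sum>i<DIM('a). Q (t i) (b i)) = (\<Sum>i<DIM('a). R (t i) (b i)) + (\<Sum>i<DIM('a). f (t i) * f (b i)) / c"
        unfolding R_def f_def using \<open>c > 0\<close> by (simp add: sum_subtractf sum_divide_distrib)
      have eG: "(\<Sum>i<DIM('a). Q (b i) (b i)) = (\<Sum>i<DIM('a). R (b i) (b i)) + (\<Sum>i<DIM('a). (f (b i))\<^sup>2) / c"
        unfolding R_def f_def using \<open>c > 0\<close> by (simp add: sum_subtractf sum_divide_distrib power2_eq_square)
      have "(\<Sum>i<DIM('a). f (t i) * f (b i)) / c \<le> k * (\<Sum>i<DIM('a). (f (b i))\<^sup>2) / c"
        using r1 \<open>c > 0\<close> by (simp add: divide_right_mono)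
      then show ?thesis unfolding eF eG using IH by (simp add: algebra_simps)
    qed
  }
qed

lemma trace_indep:
  fixes gE Q :: "'a::euclidean_space \<Rightarrow> 'a \<Rightarrow> real"
  assumes gEip: "is_inner_product gE" and eonb: "orthonormal_basis gE e" and bonb: "orthonormal_basis gE b"
    and bil: "bilinear Q"
  shows "(\<Sum>i<DIM('a). Q (e i) (e i)) = (\<Sum>i<DIM('a). Q (b i) (b i))"
proof -
  have sy: "gE x y = gE y x" for x y using gEip by (auto simp: is_inner_product_def)
  have l1: "linear (\<lambda>x. Q x y)" for y using bil by (simp add: bilinear_def)
  have l2: "linear (\<lambda>y. Q x y)" for x using bil by (simp add: bilinear_def)
  have q: "Q (e i) (e i) = (\<Sum>j<DIM('a). \<Sum>l<DIM('a). gE (e i) (b j) * gE (e i) (b l) * Q (b j) (b l))" for i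
  proof -
    have "Q (e i) (e i) = (\<Sum>j<DIM('a). gE (e i) (b j) * Q (b j) (e i))"
      by (rule onb_lin[OF gEip bonb l1])
    also have "\<dots> = (\<Sum>j<DIM('a). gE (e i) (b j) * (\<Sum>l<DIM('a). gE (e i) (b l) * Q (b j) (b l)))"
      by (subst onb_lin[OF gEip bonb l2, of "b _" "e i"]) (rule refl)
    finally show ?thesis by (simp add: sum_distrib_left mult.assoc)
  qed
  have p: "(\<Sum>i<DIM('a). gE (e i) (b j) * gE (e i) (b l)) = (if j = l then 1 else 0)"
    if "j < DIM('a)" "l < DIM('a)" for j l
  proof -
    have "(\<Sum>i<DIM('a). gE (e i) (b j) * gE (e i) (b l)) = gE (b j) (b l)"
      using onb_parseval[OF gEip eonb, of "b j" "b l"] by (simp add: sy)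
    then show ?thesis using bonb that by (simp add: orthonormal_basis_def)
  qed
  have "(\<Sum>i<DIM('a). Q (e i) (e i)) = (\<Sum>i<DIM('a). \<Sum>j<DIM('a). \<Sum>l<DIM('a). gE (e i) (b j) * gE (e i) (b l) * Q (b j) (b l))"
    unfolding q ..
  also have "\<dots> = (\<Sum>j<DIM('a). \<Sum>i<DIM('a). \<Sum>l<DIM('a). gE (e i) (b j) * gE (e i) (b l) * Q (b j) (b l))"
    by (rule sum.swap)
  also have "\<dots> = (\<Sum>j<DIM('a). \<Sum>l<DIM('a). \<Sum>i<DIM('a). gE (e i) (b j) * gE (e i) (b l) * Q (b j) (b l))"
    by (rule sum.cong[OF refl], rule sum.swap)
  also have "\<dots> = (\<Sum>j<DIM('a). \<Sum>l<DIM('a). (\<Sum>i<DIM('a). gE (e i) (b j) * gE (e i) (b l)) * Q (b j) (b l))"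
    by (simp only: sum_distrib_right)
  also have "\<dots> = (\<Sum>j<DIM('a). \<Sum>l<DIM('a). (if j = l then Q (b j) (b l) else 0))"
    by (intro sum.cong refl) (simp add: p)
  also have "\<dots> = (\<Sum>i<DIM('a). Q (b i) (b i))" by simp
  finally show ?thesis .
qed

theorem proposition3p1:
  fixes g gE II :: "'a::euclidean_space \<Rightarrow> 'a \<Rightarrow> real"
    and H :: real
    and tau taubar :: "nat \<Rightarrow> 'a"
  assumes g_ip: "is_inner_product g"
    and gE_ip: "is_inner_product gE"
    and II_sym: "sym_bilinear_form II"
    and II_psd: "\<forall>v. II v v \<ge> 0"
    and Hbar_pos: "trace_wrt gE II > 0"
    and H_pos: "H > 0"
    and comparison: "\<forall>v. H\<^sup>2 * g v v \<ge> (trace_wrt gE II)\<^sup>2 * gE v v"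
    and tau_onb: "orthonormal_basis g tau"
    and taubar_onb: "orthonormal_basis gE taubar"
  shows "H \<ge> (\<Sum>i<DIM('a). II (tau i) (taubar i))"
proof -
  define Hb where "Hb = trace_wrt gE II"
  define e where "e = (SOME e. orthonormal_basis gE e)"
  have eonb: "orthonormal_basis gE e" unfolding e_def by (rule someI[of _ taubar]) (rule taubar_onb)
  have bil: "bilinear II" using II_sym by (simp add: sym_bilinear_form_def)
  have Hb: "Hb = (\<Sum>i<DIM('a). II (taubar i) (taubar i))"
    unfolding Hb_def trace_wrt_def Let_def e_def[symmetric]
    by (rule trace_indep[OF gE_ip eonb taubar_onb bil])
  have Hbpos: "Hb > 0" using Hbar_pos Hb_def by simp
  define k where "k = H / Hb"
  have k: "k > 0" unfolding k_def using Hbpos H_pos by simp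
  have comp: "\<forall>v. gE v v \<le> k\<^sup>2 * g v v"
  proof
    fix v
    have "Hb\<^sup>2 * gE v v \<le> H\<^sup>2 * g v v" using comparison Hb_def by simp
    then have "gE v v \<le> H\<^sup>2 * g v v / Hb\<^sup>2" using Hbpos by (simp add: le_divide_eq mult.commute)
    then show "gE v v \<le> k\<^sup>2 * g v v" unfolding k_def by (simp add: power_divide)
  qed
  have psd: "psdf II" using II_sym II_psd by (simp add: psdf_def sym_bilinear_form_def)
  have card: "card {i. i < DIM('a) \<and> (\<exists>v. II (taubar i) v \<noteq> 0)} \<le> DIM('a)"
    using card_mono[of "{..<DIM('a)}" "{i. i < DIM('a) \<and> (\<exists>v. II (taubar i) v \<noteq> 0)}"] by auto
  have "(\<Sum>i<DIM('a). II (tau i) (taubar i)) \<le> k * Hb"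
    using main_ind[OF g_ip gE_ip tau_onb taubar_onb comp k psd card] Hb by simp
  also have "k * Hb = H" unfolding k_def using Hbpos by simp
  finally show ?thesis .
qed

end
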